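(* Let $F\in\mathbb{R}^{p\times n}$ be arbitrary, let $s\ge1$ and $k$ be integers, and let $(u,x,y)$ be a solution of the system over the time interval $[k+1,k+s]$ (with arbitrary state $x(k+1)$). Then there exists $v\in\mathbb{R}^{(s+n)p}$ such that $$\begin{bmatrix}u_s(k)\\ y_s(k)\end{bmatrix}=I_{G,s}(F)\,v .$$ Moreover, if $s\ge n$, then $\operatorname{rank} I_{G,s}(F)=sp+n$.
   Context: Consider the discrete-time LTI system $x(k+1)=Ax(k)+Bu(k)$, $y(k)=Cx(k)+Du(k)$ with $u\in\mathbb{R}^p$, $x\in\mathbb{R}^n$, $y\in\mathbb{R}^m$, $n\ge 1$, and $(A,B,C,D)$ a minimal (controllable and observable) realization. For a sequence $\phi$ and integers $k$, $s\ge1$, the stacked vector is $\phi_s(k)=[\phi(k+1)^T,\dots,\phi(k+s)^T]^T$. For $F\in\mathbb{R}^{p\times n}$ put $A_F=A+BF$ and $C_F=C+DF$. For an integer $s\ge1$ and a gain $F$, the finite-sample image representation consists of the matrices $M_s(F)\in\mathbb{R}^{sp\times(s+n)p}$ and $N_s(F)\in\mathbb{R}^{sm\times(s+n)p}$ whose $(l,j)$ blocks ($l=1,\dots,s$; $j=1,\dots,s+n$) are $M_{n+l-j}$ and $N_{n+l-j}$, respectively, where $M_k=FA_F^{k-1}B$ for $k\ge1$, $M_0=I_p$, $M_k=0$ for $k<0$, and $N_k=C_FA_F^{k-1}B$ for $k\ge1$, $N_0=D$, $N_k=0$ for $k<0$. Write $I_{G,s}(F)=\begin{bmatrix}M_s(F)\\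 N_s(F)\end{bmatrix}$. *)

theory Defs
  imports "Jordan_Normal_Form.DL_Rank"
begin

abbreviation mrank :: "real mat \<Rightarrow> nat" where
  "mrank M \<equiv> vec_space.rank (dim_row M) M"

text \<open>Kalman controllability matrix [B, AB, ..., A^(n-1) B] (n x np).\<close>
definition ctrb_mat :: "nat \<Rightarrow> nat \<Rightarrow> real mat \<Rightarrow> real mat \<Rightarrow> real mat" where
  "ctrb_mat n p A B = mat n (n * p) (\<lambda>(i, j). ((A ^\<^sub>m (j div p)) * B) $$ (i, j mod p))"

text \<open>Kalman observability matrix [C; CA; ...; CA^(n-1)] (nm x n).\<close>
definition obsv_mat :: "nat \<Rightarrow> nat \<Rightarrow> real mat \<Rightarrow> real mat \<Rightarrow> real mat" where
  "obsv_mat n m A C = mat (n * m) n (\<lambda>(i, j). (C * (A ^\<^sub>m (i div m))) $$ (i mod m, j))"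

definition controllable :: "nat \<Rightarrow> nat \<Rightarrow> real mat \<Rightarrow> real mat \<Rightarrow> bool" where
  "controllable n p A B \<longleftrightarrow> mrank (ctrb_mat n p A B) = n"

definition observable :: "nat \<Rightarrow> nat \<Rightarrow> real mat \<Rightarrow> real mat \<Rightarrow> bool" where
  "observable n m A C \<longleftrightarrow> mrank (obsv_mat n m A C) = n"

definition Mblk :: "nat \<Rightarrow> real mat \<Rightarrow> real mat \<Rightarrow> real mat \<Rightarrow> int \<Rightarrow> real mat" where
  "Mblk p A B F k =
     (if k < 0 then 0\<^sub>m p p
      else if k = 0 then 1\<^sub>m p
      else F * ((A + B * F) ^\<^sub>m (nat k - 1)) * B)"

definition Nblk :: "nat \<Rightarrow> nat \<Rightarrow> real mat \<Rightarrow> real mat \<Rightarrow> real mat \<Rightarrow> real mat \<Rightarrow> real mat \<Rightarrow> int \<Rightarrow> real mat" where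
  "Nblk m p A B C D F k =
     (if k < 0 then 0\<^sub>m m p
      else if k = 0 then D
      else (C + D * F) * ((A + B * F) ^\<^sub>m (nat k - 1)) * B)"

text \<open>M_s(F): sp x (s+n)p, block (l,j) (1-based) equals M_{n+l-j}.  With 0-based
  block indices l' = i div p, j' = j div p, n + l - j = n + l' - j'.\<close>
definition Ms :: "nat \<Rightarrow> nat \<Rightarrow> nat \<Rightarrow> real mat \<Rightarrow> real mat \<Rightarrow> real mat \<Rightarrow> real mat" where
  "Ms s n p A B F = mat (s * p) ((s + n) * p)
     (\<lambda>(i, j). Mblk p A B F (int n + int (i div p) - int (j div p)) $$ (i mod p, j mod p))"

definition Ns :: "nat \<Rightarrow> nat \<Rightarrow> nat \<Rightarrow> nat \<Rightarrow> real mat \<Rightarrow> real mat \<Rightarrow> real mat \<Rightarrow> real mat \<Rightarrow> real mat \<Rightarrow> real mat" where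
  "Ns s n m p A B C D F = mat (s * m) ((s + n) * p)
     (\<lambda>(i, j). Nblk m p A B C D F (int n + int (i div m) - int (j div p)) $$ (i mod m, j mod p))"

definition IGs :: "nat \<Rightarrow> nat \<Rightarrow> nat \<Rightarrow> nat \<Rightarrow> real mat \<Rightarrow> real mat \<Rightarrow> real mat \<Rightarrow> real mat \<Rightarrow> real mat \<Rightarrow> real mat" where
  "IGs s n m p A B C D F = Ms s n p A B F @\<^sub>r Ns s n m p A B C D F"

definition stack :: "nat \<Rightarrow> nat \<Rightarrow> (int \<Rightarrow> real vec) \<Rightarrow> int \<Rightarrow> real vec" where
  "stack s q \<phi> k = vec (s * q) (\<lambda>i. \<phi> (k + 1 + int (i div q)) $ (i mod q))"

end

theory Submission
  imports Defs
begin


lemma mult_unit_vec_col: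
  fixes M :: "'a::field mat"
  assumes M: "M \<in> carrier_mat nr nc" and i: "i < nc"
  shows "M *\<^sub>v unit_vec nc i = col M i"
proof (rule eq_vecI)
  fix r assume "r < dim_vec (col M i)"
  then have r: "r < nr" using M by simp
  have "(M *\<^sub>v unit_vec nc i) $ r = row M r \<bullet> unit_vec nc i" using M r by simp
  also have "\<dots> = row M r $ i" by (rule scalar_prod_right_unit[OF i])
  also have "\<dots> = col M i $ r" using M r i by simp
  finally show "(M *\<^sub>v unit_vec nc i) $ r = col M i $ r" .
qed (use M in simp)

lemma (in vec_space) colsp_eq:
  assumes M: "M \<in> carrier_mat n nc"
  shows "span (set (cols M)) = {M *\<^sub>v v | v. v \<in> carrier_vec nc}"
proof -
  have sub: "set (cols M) \<subseteq> carrier_vec n" using M cols_dim by blast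
  have len: "length (cols M) = nc" using M by simp
  have lc: "lincomb_list c (cols M) = M *\<^sub>v vec nc c" for c
  proof -
    have "lincomb_list c (cols M) = mat_of_cols n (cols M) *\<^sub>v vec (length (cols M)) c"
      by (rule lincomb_list_as_mat_mult) (use sub carrier_vecD in blast)
    also have "mat_of_cols n (cols M) = M" using M mat_of_cols_cols[of M] by simp
    finally show ?thesis using len by simp
  qed
  have "span (set (cols M)) = span_list (cols M)" by (rule span_list_as_span[OF sub, symmetric])
  also have "\<dots> = {M *\<^sub>v v | v. v \<in> carrier_vec nc}"
  proof (intro equalityI subsetI)
    fix x assume "x \<in> span_list (cols M)"
    then obtain c where x: "x = lincomb_list c (cols M)" unfolding span_list_def by blast
    have "x = M *\<^sub>v vec nc c" using x lc[of c] by (rule trans)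
    moreover have "vec nc c \<in> carrier_vec nc" by simp
    ultimately show "x \<in> {M *\<^sub>v v | v. v \<in> carrier_vec nc}" by blast
  next
    fix x assume "x \<in> {M *\<^sub>v v | v. v \<in> carrier_vec nc}"
    then obtain v where v: "v \<in> carrier_vec nc" and x: "x = M *\<^sub>v v" by blast
    have "vec nc (\<lambda>i. v $ i) = v" using v by auto
    then have "x = lincomb_list (\<lambda>i. v $ i) (cols M)" using lc x by metis
    then show "x \<in> span_list (cols M)" unfolding span_list_def by force
  qed
  finally show ?thesis .
qed

lemma (in vec_space) rank_cong_colsp:
  assumes M: "M \<in> carrier_mat n nc" and P: "P \<in> carrier_mat n r"
    and "{M *\<^sub>v v | v. v \<in> carrier_vec nc} = {P *\<^sub>v v | v. v \<in> carrier_vec r}"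
  shows "rank M = rank P"
  unfolding rank_def using colsp_eq[OF M] colsp_eq[OF P] assms(3) by simp

lemma (in vec_space) rank_le_card_cols:
  assumes M: "M \<in> carrier_mat n nc"
  shows "rank M \<le> card (set (cols M))"
proof -
  obtain S where "maximal S (\<lambda>T. T \<subseteq> set (cols M) \<and> lin_indpt T)"
    using maximal_exists[of "(\<lambda>T. T \<subseteq> set (cols M) \<and> lin_indpt T)" "card (set (cols M))" "{}"]
    by (meson List.finite_set card_mono empty_iff empty_subsetI finite_lin_indpt2 rev_finite_subset)
  moreover then have "card S \<le> card (set (cols M))" by (simp add: card_mono maximal_def)
  ultimately show ?thesis using rank_card_indpt[OF M] by simp
qed

lemma (in vec_space) full_rank_inj:
  assumes M: "M \<in> carrier_mat n nc" and r: "rank M = nc"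
    and v: "v \<in> carrier_vec nc" and z: "M *\<^sub>v v = 0\<^sub>v n"
  shows "v = 0\<^sub>v nc"
proof -
  have d: "distinct (cols M)"
  proof (rule ccontr)
    assume "\<not> distinct (cols M)"
    then have "card (set (cols M)) < length (cols M)"
      using card_distinct card_length le_neq_implies_less by blast
    then show False using rank_le_card_cols[OF M] r M by simp
  qed
  have "lin_indpt (set (cols M))" using full_rank_lin_indpt[OF M r d] .
  then show ?thesis using lin_depI[OF M v _ z d] by blast
qed

lemma (in vec_space) inj_full_rank:
  assumes M: "M \<in> carrier_mat n nc"
    and inj: "\<And>v. v \<in> carrier_vec nc \<Longrightarrow> M *\<^sub>v v = 0\<^sub>v n \<Longrightarrow> v = 0\<^sub>v nc"
  shows "rank M = nc"
proof -
  have d: "distinct (cols M)"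
  proof (rule ccontr)
    assume "\<not> distinct (cols M)"
    then obtain i j where ij0: "i < length (cols M)" "j < length (cols M)" "i \<noteq> j"
      "cols M ! i = cols M ! j"
      unfolding distinct_conv_nth by blast
    have ij: "i < nc" "j < nc" "i \<noteq> j" "col M i = col M j"
      using ij0 M by (simp_all add: cols_nth)
    let ?w = "unit_vec nc i - unit_vec nc j :: 'a vec"
    have w: "?w \<in> carrier_vec nc" by simp
    have "M *\<^sub>v ?w = M *\<^sub>v unit_vec nc i - M *\<^sub>v unit_vec nc j"
      using M by (intro mult_minus_distrib_mat_vec) auto
    also have "\<dots> = col M i - col M j" using ij M by (simp only: mult_unit_vec_col)
    also have "\<dots> = 0\<^sub>v n" unfolding ij(4) using M ij by (intro minus_cancel_vec) simp
    finally have "M *\<^sub>v ?w = 0\<^sub>v n" .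
    then have "?w = 0\<^sub>v nc" by (rule inj[OF w])
    then have "?w $ i = 0" using ij by simp
    moreover have "?w $ i = 1" using ij by simp
    ultimately show False by simp
  qed
  have "lin_indpt (set (cols M))"
  proof
    assume "lin_dep (set (cols M))"
    then obtain v where "v \<in> carrier_vec nc" "v \<noteq> 0\<^sub>v nc" "M *\<^sub>v v = 0\<^sub>v n"
      using lin_depE[OF M _ d] by blast
    then show False using inj by blast
  qed
  then show ?thesis using lin_indpt_full_rank[OF M d] by blast
qed

lemma (in vec_space) full_row_rank_surj:
  assumes M: "M \<in> carrier_mat n nc" and r: "rank M = n" and x: "x \<in> carrier_vec n"
  shows "\<exists>z \<in> carrier_vec nc. M *\<^sub>v z = x"
proof -
  obtain S where S: "maximal S (\<lambda>T. T \<subseteq> set (cols M) \<and> lin_indpt T)"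
    using maximal_exists[of "(\<lambda>T. T \<subseteq> set (cols M) \<and> lin_indpt T)" "card (set (cols M))" "{}"]
    by (meson List.finite_set card_mono empty_iff empty_subsetI finite_lin_indpt2 rev_finite_subset)
  have cS: "card S = n" using rank_card_indpt[OF M S] r by simp
  have SM: "S \<subseteq> set (cols M)" and li: "lin_indpt S" using S unfolding maximal_def by auto
  have sub: "set (cols M) \<subseteq> carrier_vec n" using M cols_dim by blast
  have fS: "finite S" using SM finite_subset by blast
  have "basis S"
    by (rule dim_li_is_basis) (use fS SM sub li cS dim_is_n in auto)
  then have "span S = carrier_vec n" unfolding basis_def by simp
  then have "x \<in> span (set (cols M))" using span_is_monotone[OF SM] x by blast
  then have "x \<in> {M *\<^sub>v v |v. v \<in> carrier_vec nc}" using colsp_eq[OF M] by simp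
  then obtain z where "z \<in> carrier_vec nc" "x = M *\<^sub>v z" by blast
  then show ?thesis by metis
qed



definition vsum :: "nat \<Rightarrow> (nat \<Rightarrow> real vec) \<Rightarrow> nat \<Rightarrow> real vec" where
  "vsum d f t = vec d (\<lambda>i. \<Sum>j<t. f j $ i)"

definition vblk :: "nat \<Rightarrow> real vec \<Rightarrow> nat \<Rightarrow> real vec" where
  "vblk p v j = vec p (\<lambda>i. v $ (j * p + i))"

definition stk :: "nat \<Rightarrow> nat \<Rightarrow> (nat \<Rightarrow> real vec) \<Rightarrow> real vec" where
  "stk s q f = vec (s * q) (\<lambda>i. f (i div q) $ (i mod q))"

fun st :: "real mat \<Rightarrow> real mat \<Rightarrow> real vec \<Rightarrow> (nat \<Rightarrow> real vec) \<Rightarrow> nat \<Rightarrow> real vec" where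
  "st A B x0 w 0 = x0"
| "st A B x0 w (Suc t) = A *\<^sub>v st A B x0 w t + B *\<^sub>v w t"

lemma vsum_carrier[simp]: "vsum d f t \<in> carrier_vec d"
  unfolding vsum_def by simp

lemma vblk_carrier[simp]: "vblk p v j \<in> carrier_vec p"
  unfolding vblk_def by simp

lemma stk_carrier[simp]: "stk s q f \<in> carrier_vec (s * q)"
  unfolding stk_def by simp

lemma vsum_Suc:
  assumes "f t \<in> carrier_vec d"
  shows "vsum d f (Suc t) = vsum d f t + f t"
  by (rule eq_vecI) (use assms in \<open>simp_all add: vsum_def\<close>)

lemma vsum_Suc_shift:
  assumes "f 0 \<in> carrier_vec d"
  shows "vsum d f (Suc t) = f 0 + vsum d (\<lambda>j. f (Suc j)) t"
  by (rule eq_vecI) (use assms in \<open>simp_all add: vsum_def sum.lessThan_Suc_shift del: sum.lessThan_Suc\<close>)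

lemma vsum_cong:
  assumes "\<And>j. j < t \<Longrightarrow> f j = g j"
  shows "vsum d f t = vsum d g t"
  unfolding vsum_def using assms by (intro eq_vecI) auto

lemma vsum_mult:
  assumes M: "M \<in> carrier_mat r d" and f: "\<And>j. j < t \<Longrightarrow> f j \<in> carrier_vec d"
  shows "M *\<^sub>v vsum d f t = vsum r (\<lambda>j. M *\<^sub>v f j) t"
proof (rule eq_vecI)
  fix i assume "i < dim_vec (vsum r (\<lambda>j. M *\<^sub>v f j) t)"
  then have i: "i < r" by (simp add: vsum_def)
  have "(M *\<^sub>v vsum d f t) $ i = (\<Sum>c<d. M $$ (i, c) * (\<Sum>j<t. f j $ c))"
    using M i by (simp add: vsum_def scalar_prod_def lessThan_atLeast0)
  also have "\<dots> = (\<Sum>j<t. \<Sum>c<d. M $$ (i, c) * f j $ c)"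
    by (simp add: sum_distrib_left sum.swap[of _ "{..<d}"])
  also have "\<dots> = (\<Sum>j<t. (M *\<^sub>v f j) $ i)"
  proof (rule sum.cong[OF refl])
    fix j assume "j \<in> {..<t}"
    then have "f j \<in> carrier_vec d" using f by simp
    then show "(\<Sum>c<d. M $$ (i, c) * f j $ c) = (M *\<^sub>v f j) $ i"
      using M i by (simp add: scalar_prod_def lessThan_atLeast0)
  qed
  also have "\<dots> = vsum r (\<lambda>j. M *\<^sub>v f j) t $ i"
    using i by (simp add: vsum_def)
  finally show "(M *\<^sub>v vsum d f t) $ i = vsum r (\<lambda>j. M *\<^sub>v f j) t $ i" .
qed (use M in \<open>simp add: vsum_def\<close>)

lemma vsum_zero_tail:
  assumes "t \<le> t'" and "\<And>j. t \<le> j \<Longrightarrow> j < t' \<Longrightarrow> f j = 0\<^sub>v d"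
  shows "vsum d f t' = vsum d f t"
  using assms
proof (induction t' rule: dec_induct)
  case base
  then show ?case by simp
next
  case (step t')
  then have "vsum d f (Suc t') = vsum d f t' + 0\<^sub>v d" using vsum_Suc[of f t' d] by simp
  also have "\<dots> = vsum d f t'" by simp
  finally show ?case using step by simp
qed

lemma sum_blocks:
  fixes g :: "nat \<Rightarrow> 'a::comm_monoid_add" and N p :: nat
  shows "(\<Sum>c<N * p. g c) = (\<Sum>j<N. \<Sum>i<p. g (j * p + i))"
proof -
  have "(\<Sum>c<N * p. g c) = (\<Sum>j<N. sum g {j * p..<j * p + p})"
    using sum.nat_group[of g p N] by simp
  also have "\<dots> = (\<Sum>j<N. \<Sum>i<p. g (j * p + i))"
  proof (rule sum.cong[OF refl])
    fix j
    show "sum g {j * p..<j * p + p} = (\<Sum>i<p. g (j * p + i))"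
      using sum.shift_bounds_nat_ivl[of g 0 "j*p" p] by (simp add: lessThan_atLeast0 add.commute)
  qed
  finally show ?thesis .
qed



lemma blockmat_mult:
  assumes G: "\<And>l j. G l j \<in> carrier_mat r p" and v: "v \<in> carrier_vec (N * p)"
    and l: "l < s" and i: "i < r"
  shows "(mat (s * r) (N * p) (\<lambda>(a, b). G (a div r) (b div p) $$ (a mod r, b mod p)) *\<^sub>v v) $ (l * r + i)
       = vsum r (\<lambda>j. G l j *\<^sub>v vblk p v j) N $ i"
proof -
  have ri: "l * r + i < s * r"
  proof -
    have "l * r + i < l * r + r" using i by simp
    also have "\<dots> = Suc l * r" by simp
    also have "\<dots> \<le> s * r" using l by (intro mult_right_mono) auto
    finally show ?thesis .
  qed
  have dv: "(l * r + i) div r = l" "(l * r + i) mod r = i" using i by auto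
  have "(mat (s * r) (N * p) (\<lambda>(a, b). G (a div r) (b div p) $$ (a mod r, b mod p)) *\<^sub>v v) $ (l * r + i)
      = (\<Sum>c<N * p. G l (c div p) $$ (i, c mod p) * v $ c)"
    using ri v dv by (simp add: scalar_prod_def lessThan_atLeast0)
  also have "\<dots> = (\<Sum>j<N. \<Sum>i'<p. G l ((j * p + i') div p) $$ (i, (j * p + i') mod p) * v $ (j * p + i'))"
    by (rule sum_blocks)
  also have "\<dots> = (\<Sum>j<N. \<Sum>i'<p. G l j $$ (i, i') * v $ (j * p + i'))"
    by (intro sum.cong refl) auto
  also have "\<dots> = (\<Sum>j<N. (G l j *\<^sub>v vblk p v j) $ i)"
  proof (rule sum.cong[OF refl])
    fix j
    have "G l j \<in> carrier_mat r p" by (rule G)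
    then show "(\<Sum>i'<p. G l j $$ (i, i') * v $ (j * p + i')) = (G l j *\<^sub>v vblk p v j) $ i"
      using i by (simp add: scalar_prod_def lessThan_atLeast0 vblk_def)
  qed
  also have "\<dots> = vsum r (\<lambda>j. G l j *\<^sub>v vblk p v j) N $ i"
    using i by (simp add: vsum_def)
  finally show ?thesis .
qed

lemma stk_eqI:
  assumes w: "w \<in> carrier_vec (s * r)"
    and eq: "\<And>l i. l < s \<Longrightarrow> i < r \<Longrightarrow> w $ (l * r + i) = f l $ i"
  shows "w = stk s r f"
proof (rule eq_vecI)
  fix a assume "a < dim_vec (stk s r f)"
  then have a: "a < s * r" by (simp add: stk_def)
  then have r0: "r > 0" by (cases r) auto
  have a1: "a div r < s" using a by (simp add: less_mult_imp_div_less)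
  have a2: "a mod r < r" using r0 by simp
  have "w $ a = w $ ((a div r) * r + a mod r)" by simp
  also have "\<dots> = f (a div r) $ (a mod r)" using eq[OF a1 a2] .
  finally show "w $ a = stk s r f $ a" using a by (simp add: stk_def)
qed (use w in \<open>simp add: stk_def\<close>)

lemma stk_cong:
  assumes "\<And>l. l < s \<Longrightarrow> f l = g l"
  shows "stk s r f = stk s r g"
proof (rule eq_vecI)
  fix a assume "a < dim_vec (stk s r g)"
  then have a: "a < s * r" by (simp add: stk_def)
  have a1: "a div r < s" using a by (simp add: less_mult_imp_div_less)
  then show "stk s r f $ a = stk s r g $ a" using a assms by (simp add: stk_def)
qed (simp add: stk_def)

lemma stk_index:
  assumes "l < s" "i < r"
  shows "stk s r f $ (l * r + i) = f l $ i"
proof -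
  have "l * r + i < s * r"
  proof -
    have "l * r + i < l * r + r" using assms by simp
    also have "\<dots> = Suc l * r" by simp
    also have "\<dots> \<le> s * r" using assms by (intro mult_right_mono) auto
    finally show ?thesis .
  qed
  then show ?thesis using assms by (simp add: stk_def)
qed

lemma pow_mat_comm:
  assumes A: "A \<in> carrier_mat n n"
  shows "A * (A ^\<^sub>m k) = (A ^\<^sub>m k) * A"
proof (induction k)
  case 0
  then show ?case using A by simp
next
  case (Suc k)
  have "A * (A ^\<^sub>m Suc k) = (A * A ^\<^sub>m k) * A" using A by (simp add: assoc_mult_mat[of _ n n _ n _ n])
  also have "\<dots> = (A ^\<^sub>m k * A) * A" using Suc by simp
  finally show ?case by simp
qed

lemma st_carrier:
  assumes A: "A \<in> carrier_mat n n" and B: "B \<in> carrier_mat n p" and x0: "x0 \<in> carrier_vec n"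
    and w: "\<And>j. j < t \<Longrightarrow> w j \<in> carrier_vec p"
  shows "st A B x0 w t \<in> carrier_vec n"
  using w by (induction t) (use A B x0 in auto)

lemma st_closed:
  assumes A: "A \<in> carrier_mat n n" and B: "B \<in> carrier_mat n p"
    and w: "\<And>j. j < t \<Longrightarrow> w j \<in> carrier_vec p"
  shows "st A B (0\<^sub>v n) w t = vsum n (\<lambda>j. (A ^\<^sub>m (t - 1 - j)) *\<^sub>v (B *\<^sub>v w j)) t"
  using w
proof (induction t)
  case 0
  show ?case by (rule eq_vecI) (simp_all add: vsum_def)
next
  case (Suc t)
  have wj: "\<And>j. j < t \<Longrightarrow> w j \<in> carrier_vec p" using Suc.prems by simp
  have wt: "w t \<in> carrier_vec p" using Suc.prems by simp
  have "st A B (0\<^sub>v n) w (Suc t) = A *\<^sub>v vsum n (\<lambda>j. (A ^\<^sub>m (t - 1 - j)) *\<^sub>v (B *\<^sub>v w j)) t + B *\<^sub>v w t"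
    using Suc.IH[OF wj] by simp
  also have "A *\<^sub>v vsum n (\<lambda>j. (A ^\<^sub>m (t - 1 - j)) *\<^sub>v (B *\<^sub>v w j)) t
      = vsum n (\<lambda>j. A *\<^sub>v ((A ^\<^sub>m (t - 1 - j)) *\<^sub>v (B *\<^sub>v w j))) t"
    by (rule vsum_mult[OF A]) (use A B wj in \<open>auto intro!: mult_mat_vec_carrier[OF pow_carrier_mat[OF A]] mult_mat_vec_carrier[OF B]\<close>)
  also have "\<dots> = vsum n (\<lambda>j. (A ^\<^sub>m (Suc t - 1 - j)) *\<^sub>v (B *\<^sub>v w j)) t"
  proof (rule vsum_cong)
    fix j assume j: "j < t"
    have "A *\<^sub>v ((A ^\<^sub>m (t - 1 - j)) *\<^sub>v (B *\<^sub>v w j)) = (A * A ^\<^sub>m (t - 1 - j)) *\<^sub>v (B *\<^sub>v w j)"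
      using A B wj[OF j] by (simp add: assoc_mult_mat_vec[of _ n n _ n])
    also have "A * A ^\<^sub>m (t - 1 - j) = A ^\<^sub>m Suc (t - 1 - j)" using pow_mat_comm[OF A] by simp
    also have "Suc (t - 1 - j) = Suc t - 1 - j" using j by simp
    finally show "A *\<^sub>v ((A ^\<^sub>m (t - 1 - j)) *\<^sub>v (B *\<^sub>v w j)) = (A ^\<^sub>m (Suc t - 1 - j)) *\<^sub>v (B *\<^sub>v w j)" .
  qed
  also have "B *\<^sub>v w t = (A ^\<^sub>m (Suc t - 1 - t)) *\<^sub>v (B *\<^sub>v w t)" using A B wt by simp
  also have "vsum n (\<lambda>j. (A ^\<^sub>m (Suc t - 1 - j)) *\<^sub>v (B *\<^sub>v w j)) t + \<dots>
      = vsum n (\<lambda>j. (A ^\<^sub>m (Suc t - 1 - j)) *\<^sub>v (B *\<^sub>v w j)) (Suc t)"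
    by (rule vsum_Suc[symmetric]) (use A B wt in simp)
  finally show ?case .
qed



lemma zero_mat_mult_vec: "w \<in> carrier_vec p \<Longrightarrow> 0\<^sub>m r p *\<^sub>v w = 0\<^sub>v r"
  by (rule eq_vecI) (auto simp: scalar_prod_def)

lemma blocksum:
  assumes H: "H \<in> carrier_mat r n" and E: "E \<in> carrier_mat r p"
    and Af: "Af \<in> carrier_mat n n" and B: "B \<in> carrier_mat n p"
    and w: "\<And>j. w j \<in> carrier_vec p" and t: "t < N"
    and G: "\<And>j. j < N \<Longrightarrow> G j = (if j < t then H * Af ^\<^sub>m (t - 1 - j) * B
                                     else if j = t then E else 0\<^sub>m r p)"
  shows "vsum r (\<lambda>j. G j *\<^sub>v w j) N = H *\<^sub>v st Af B (0\<^sub>v n) w t + E *\<^sub>v w t"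
proof -
  have "vsum r (\<lambda>j. G j *\<^sub>v w j) N = vsum r (\<lambda>j. G j *\<^sub>v w j) (Suc t)"
  proof (rule vsum_zero_tail)
    show "Suc t \<le> N" using t by simp
    fix j assume "Suc t \<le> j" "j < N"
    then have "G j = 0\<^sub>m r p" using G by simp
    then show "G j *\<^sub>v w j = 0\<^sub>v r" using zero_mat_mult_vec[OF w] by simp
  qed
  also have "\<dots> = vsum r (\<lambda>j. G j *\<^sub>v w j) t + G t *\<^sub>v w t"
  proof (rule vsum_Suc)
    have "G t = E" using G t by simp
    then show "G t *\<^sub>v w t \<in> carrier_vec r" using E w by simp
  qed
  also have "G t = E" using G t by simp
  also have "vsum r (\<lambda>j. G j *\<^sub>v w j) t = vsum r (\<lambda>j. H *\<^sub>v ((Af ^\<^sub>m (t - 1 - j)) *\<^sub>v (B *\<^sub>v w j))) t"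
  proof (rule vsum_cong)
    fix j assume j: "j < t"
    then have "G j = H * Af ^\<^sub>m (t - 1 - j) * B" using G t by simp
    then show "G j *\<^sub>v w j = H *\<^sub>v ((Af ^\<^sub>m (t - 1 - j)) *\<^sub>v (B *\<^sub>v w j))"
      using H Af B w[of j]
      by (simp add: assoc_mult_mat_vec[of _ r n _ p] assoc_mult_mat_vec[of _ r n _ n] assoc_mult_mat_vec[of _ n n _ p])
  qed
  also have "\<dots> = H *\<^sub>v vsum n (\<lambda>j. (Af ^\<^sub>m (t - 1 - j)) *\<^sub>v (B *\<^sub>v w j)) t"
    by (rule vsum_mult[OF H, symmetric]) (use Af B w in \<open>auto intro!: mult_mat_vec_carrier[OF pow_carrier_mat[OF Af]] mult_mat_vec_carrier[OF B]\<close>)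
  also have "vsum n (\<lambda>j. (Af ^\<^sub>m (t - 1 - j)) *\<^sub>v (B *\<^sub>v w j)) t = st Af B (0\<^sub>v n) w t"
    by (rule st_closed[OF Af B w, symmetric])
  finally show ?thesis .
qed

lemma Mblk_eq:
  "Mblk p A B F (int t - int j) = (if j < t then F * (A + B * F) ^\<^sub>m (t - 1 - j) * B
                                   else if j = t then 1\<^sub>m p else 0\<^sub>m p p)"
proof -
  have "j < t \<Longrightarrow> nat (int t - int j) - 1 = t - 1 - j" by simp
  then show ?thesis unfolding Mblk_def by simp
qed

lemma Nblk_eq:
  "Nblk m p A B C D F (int t - int j) = (if j < t then (C + D * F) * (A + B * F) ^\<^sub>m (t - 1 - j) * B
                                   else if j = t then D else 0\<^sub>m m p)"
proof -
  have "j < t \<Longrightarrow> nat (int t - int j) - 1 = t - 1 - j" by simp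
  then show ?thesis unfolding Nblk_def by simp
qed

lemma Mblk_carrier:
  assumes A: "A \<in> carrier_mat n n" and B: "B \<in> carrier_mat n p" and F: "F \<in> carrier_mat p n"
  shows "Mblk p A B F k \<in> carrier_mat p p"
proof -
  have Af: "A + B * F \<in> carrier_mat n n" using A B F by simp
  have "F * (A + B * F) ^\<^sub>m e * B \<in> carrier_mat p p" for e
    using F Af B by (meson mult_carrier_mat pow_carrier_mat)
  then show ?thesis unfolding Mblk_def by simp
qed

lemma Nblk_carrier:
  assumes A: "A \<in> carrier_mat n n" and B: "B \<in> carrier_mat n p" and F: "F \<in> carrier_mat p n"
    and C: "C \<in> carrier_mat m n" and D: "D \<in> carrier_mat m p"
  shows "Nblk m p A B C D F k \<in> carrier_mat m p"
proof -
  have Af: "A + B * F \<in> carrier_mat n n" using A B F by simp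
  have Cf: "C + D * F \<in> carrier_mat m n" using C D F by simp
  have "(C + D * F) * (A + B * F) ^\<^sub>m e * B \<in> carrier_mat m p" for e
    using Cf Af B by (meson mult_carrier_mat pow_carrier_mat)
  then show ?thesis unfolding Nblk_def using D by simp
qed

lemma Ms_mult:
  assumes A: "A \<in> carrier_mat n n" and B: "B \<in> carrier_mat n p" and F: "F \<in> carrier_mat p n"
    and v: "v \<in> carrier_vec ((s + q) * p)"
  shows "Ms s q p A B F *\<^sub>v v = stk s p (\<lambda>l. F *\<^sub>v st (A + B * F) B (0\<^sub>v n) (vblk p v) (q + l) + vblk p v (q + l))"
proof (rule stk_eqI)
  show "Ms s q p A B F *\<^sub>v v \<in> carrier_vec (s * p)" unfolding Ms_def by (rule mult_mat_vec_carrier[OF mat_carrier v])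
  fix l i assume l: "l < s" and i: "i < p"
  have Af: "A + B * F \<in> carrier_mat n n" using A B F by simp
  have eq1: "(Ms s q p A B F *\<^sub>v v) $ (l * p + i) = vsum p (\<lambda>j. Mblk p A B F (int q + int l - int j) *\<^sub>v vblk p v j) (s + q) $ i"
    unfolding Ms_def
    by (rule blockmat_mult[where G = "\<lambda>l j. Mblk p A B F (int q + int l - int j)", OF Mblk_carrier[OF A B F] v l i])
  have G: "Mblk p A B F (int q + int l - int j) = (if j < q + l then F * (A + B * F) ^\<^sub>m (q + l - 1 - j) * B
                                     else if j = q + l then 1\<^sub>m p else 0\<^sub>m p p)" for j
  proof -
    have "int q + int l - int j = int (q + l) - int j" by simp
    then show ?thesis using Mblk_eq[of p A B F "q + l" j] by simp
  qed
  have eq2: "vsum p (\<lambda>j. Mblk p A B F (int q + int l - int j) *\<^sub>v vblk p v j) (s + q)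
     = F *\<^sub>v st (A + B * F) B (0\<^sub>v n) (vblk p v) (q + l) + 1\<^sub>m p *\<^sub>v vblk p v (q + l)"
    by (rule blocksum[where G = "\<lambda>j. Mblk p A B F (int q + int l - int j)" and w = "vblk p v"
          and N = "s + q" and t = "q + l", OF F one_carrier_mat Af B vblk_carrier _ G]) (use l in simp)
  show "(Ms s q p A B F *\<^sub>v v) $ (l * p + i) = (F *\<^sub>v st (A + B * F) B (0\<^sub>v n) (vblk p v) (q + l) + vblk p v (q + l)) $ i"
    using eq1 eq2 by simp
qed

lemma Ns_mult:
  assumes A: "A \<in> carrier_mat n n" and B: "B \<in> carrier_mat n p" and F: "F \<in> carrier_mat p n"
    and C: "C \<in> carrier_mat m n" and D: "D \<in> carrier_mat m p"
    and v: "v \<in> carrier_vec ((s + q) * p)"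
  shows "Ns s q m p A B C D F *\<^sub>v v = stk s m (\<lambda>l. (C + D * F) *\<^sub>v st (A + B * F) B (0\<^sub>v n) (vblk p v) (q + l) + D *\<^sub>v vblk p v (q + l))"
proof (rule stk_eqI)
  show "Ns s q m p A B C D F *\<^sub>v v \<in> carrier_vec (s * m)" unfolding Ns_def by (rule mult_mat_vec_carrier[OF mat_carrier v])
  fix l i assume l: "l < s" and i: "i < m"
  have Af: "A + B * F \<in> carrier_mat n n" using A B F by simp
  have Cf: "C + D * F \<in> carrier_mat m n" using C D F by simp
  have eq1: "(Ns s q m p A B C D F *\<^sub>v v) $ (l * m + i) = vsum m (\<lambda>j. Nblk m p A B C D F (int q + int l - int j) *\<^sub>v vblk p v j) (s + q) $ i"
    unfolding Ns_def
    by (rule blockmat_mult[where G = "\<lambda>l j. Nblk m p A B C D F (int q + int l - int j)", OF Nblk_carrier[OF A B F C D] v l i])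
  have G: "Nblk m p A B C D F (int q + int l - int j) = (if j < q + l then (C + D * F) * (A + B * F) ^\<^sub>m (q + l - 1 - j) * B
                                     else if j = q + l then D else 0\<^sub>m m p)" for j
  proof -
    have "int q + int l - int j = int (q + l) - int j" by simp
    then show ?thesis using Nblk_eq[of m p A B C D F "q + l" j] by simp
  qed
  have eq2: "vsum m (\<lambda>j. Nblk m p A B C D F (int q + int l - int j) *\<^sub>v vblk p v j) (s + q)
     = (C + D * F) *\<^sub>v st (A + B * F) B (0\<^sub>v n) (vblk p v) (q + l) + D *\<^sub>v vblk p v (q + l)"
    by (rule blocksum[where G = "\<lambda>j. Nblk m p A B C D F (int q + int l - int j)" and w = "vblk p v"
          and N = "s + q" and t = "q + l", OF Cf D Af B vblk_carrier _ G]) (use l in simp)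
  show "(Ns s q m p A B C D F *\<^sub>v v) $ (l * m + i) = ((C + D * F) *\<^sub>v st (A + B * F) B (0\<^sub>v n) (vblk p v) (q + l) + D *\<^sub>v vblk p v (q + l)) $ i"
    using eq1 eq2 by simp
qed



lemma fb_id:
  fixes A B F :: "real mat"
  assumes A: "A \<in> carrier_mat r n" and B: "B \<in> carrier_mat r p" and F: "F \<in> carrier_mat p n"
    and x: "x \<in> carrier_vec n" and w: "w \<in> carrier_vec p"
  shows "(A + B * F) *\<^sub>v x + B *\<^sub>v w = A *\<^sub>v x + B *\<^sub>v (F *\<^sub>v x + w)"
proof -
  have BF: "B * F \<in> carrier_mat r n" using B F by simp
  have 1: "(A + B * F) *\<^sub>v x = A *\<^sub>v x + B *\<^sub>v (F *\<^sub>v x)"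
    using add_mult_distrib_mat_vec[OF A BF x] assoc_mult_mat_vec[OF B F x] by simp
  have 2: "B *\<^sub>v (F *\<^sub>v x + w) = B *\<^sub>v (F *\<^sub>v x) + B *\<^sub>v w"
    using mult_add_distrib_mat_vec[OF B _ w, of "F *\<^sub>v x"] F x by simp
  show ?thesis unfolding 1 2
    by (rule eq_vecI) (use A B F x w in \<open>simp_all add: add.assoc\<close>)
qed

lemma fb_id2:
  fixes A B F :: "real mat"
  assumes A: "A \<in> carrier_mat r n" and B: "B \<in> carrier_mat r p" and F: "F \<in> carrier_mat p n"
    and x: "x \<in> carrier_vec n" and w: "w \<in> carrier_vec p"
  shows "(A + B * F) *\<^sub>v x + B *\<^sub>v (w - F *\<^sub>v x) = A *\<^sub>v x + B *\<^sub>v w"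
proof -
  have Fx: "F *\<^sub>v x \<in> carrier_vec p" using F x by simp
  have "w - F *\<^sub>v x \<in> carrier_vec p" using Fx w by simp
  then have "(A + B * F) *\<^sub>v x + B *\<^sub>v (w - F *\<^sub>v x) = A *\<^sub>v x + B *\<^sub>v (F *\<^sub>v x + (w - F *\<^sub>v x))"
    by (rule fb_id[OF A B F x])
  also have "F *\<^sub>v x + (w - F *\<^sub>v x) = w"
    using F x w by (intro eq_vecI) (auto simp: algebra_simps)
  finally show ?thesis .
qed

lemma st_prefix:
  assumes "\<And>j. j < t \<Longrightarrow> w1 j = w2 j"
  shows "st M B x w1 t = st M B x w2 t"
  using assms by (induction t) auto

lemma vblk_stk:
  assumes j: "j < N" and f: "f j \<in> carrier_vec p"
  shows "vblk p (stk N p f) j = f j"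
proof (rule eq_vecI)
  fix i assume "i < dim_vec (f j)"
  then have i: "i < p" using f by simp
  show "vblk p (stk N p f) j $ i = f j $ i"
    using stk_index[OF j i, of f] i by (simp add: vblk_def)
qed (use f in simp)

lemma stk_vblk:
  assumes a: "a \<in> carrier_vec (N * p)"
  shows "stk N p (vblk p a) = a"
  by (rule stk_eqI[OF a, symmetric]) (simp add: vblk_def)

lemma feedback_st:
  assumes A: "A \<in> carrier_mat n n" and B: "B \<in> carrier_mat n p" and F: "F \<in> carrier_mat p n"
    and w: "\<And>j. w j \<in> carrier_vec p"
  shows "st (A + B * F) B (0\<^sub>v n) w (q + l)
       = st A B (st (A + B * F) B (0\<^sub>v n) w q) (\<lambda>l. F *\<^sub>v st (A + B * F) B (0\<^sub>v n) w (q + l) + w (q + l)) l"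
proof (induction l)
  case 0
  then show ?case by simp
next
  case (Suc l)
  have Af: "A + B * F \<in> carrier_mat n n" using A B F by simp
  have x: "st (A + B * F) B (0\<^sub>v n) w (q + l) \<in> carrier_vec n"
    by (rule st_carrier[OF Af B]) (use w in auto)
  have "st (A + B * F) B (0\<^sub>v n) w (q + Suc l)
      = (A + B * F) *\<^sub>v st (A + B * F) B (0\<^sub>v n) w (q + l) + B *\<^sub>v w (q + l)" by simp
  also have "\<dots> = A *\<^sub>v st (A + B * F) B (0\<^sub>v n) w (q + l) + B *\<^sub>v (F *\<^sub>v st (A + B * F) B (0\<^sub>v n) w (q + l) + w (q + l))"
    by (rule fb_id[OF A B F x w])
  finally show ?case using Suc.IH by simp
qed

lemma IG_mult:
  assumes A: "A \<in> carrier_mat n n" and B: "B \<in> carrier_mat n p" and F: "F \<in> carrier_mat p n"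
    and C: "C \<in> carrier_mat m n" and D: "D \<in> carrier_mat m p"
    and v: "v \<in> carrier_vec ((s + q) * p)"
  defines "X \<equiv> st (A + B * F) B (0\<^sub>v n) (vblk p v)"
  defines "u' \<equiv> (\<lambda>l. F *\<^sub>v X (q + l) + vblk p v (q + l))"
  shows "IGs s q m p A B C D F *\<^sub>v v = stk s p u' @\<^sub>v stk s m (\<lambda>l. C *\<^sub>v st A B (X q) u' l + D *\<^sub>v u' l)"
proof -
  have Ms: "Ms s q p A B F \<in> carrier_mat (s * p) ((s + q) * p)" unfolding Ms_def by (rule mat_carrier)
  have Ns: "Ns s q m p A B C D F \<in> carrier_mat (s * m) ((s + q) * p)" unfolding Ns_def by (rule mat_carrier)
  have Af: "A + B * F \<in> carrier_mat n n" using A B F by simp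
  have "IGs s q m p A B C D F *\<^sub>v v = (Ms s q p A B F *\<^sub>v v) @\<^sub>v (Ns s q m p A B C D F *\<^sub>v v)"
    unfolding IGs_def by (rule mat_mult_append[OF Ms Ns v])
  also have "Ms s q p A B F *\<^sub>v v = stk s p u'"
    unfolding Ms_mult[OF A B F v] u'_def X_def ..
  also have "Ns s q m p A B C D F *\<^sub>v v = stk s m (\<lambda>l. C *\<^sub>v st A B (X q) u' l + D *\<^sub>v u' l)"
    unfolding Ns_mult[OF A B F C D v]
  proof (rule stk_cong)
    fix l
    have x: "X (q + l) \<in> carrier_vec n" unfolding X_def
      by (rule st_carrier[OF Af B]) auto
    have e1: "(C + D * F) *\<^sub>v X (q + l) + D *\<^sub>v vblk p v (q + l) = C *\<^sub>v X (q + l) + D *\<^sub>v u' l"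
      unfolding u'_def by (rule fb_id[OF C D F x vblk_carrier])
    have e2: "X (q + l) = st A B (X q) u' l"
      unfolding X_def u'_def by (rule feedback_st[OF A B F vblk_carrier])
    have "(C + D * F) *\<^sub>v X (q + l) + D *\<^sub>v vblk p v (q + l) = C *\<^sub>v st A B (X q) u' l + D *\<^sub>v u' l"
      using e1 e2 by simp
    then show "(C + D * F) *\<^sub>v st (A + B * F) B (0\<^sub>v n) (vblk p v) (q + l) + D *\<^sub>v vblk p v (q + l)
        = C *\<^sub>v st A B (X q) u' l + D *\<^sub>v u' l" unfolding X_def .
  qed
  finally show ?thesis .
qed



lemma vsum_reflect: "vsum d (\<lambda>j. f (t - 1 - j)) t = vsum d f t"
proof -
  have "\<And>i. (\<Sum>j<t. f (t - 1 - j) $ i) = (\<Sum>j<t. f j $ i)"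
  proof -
    fix i
    have "(\<Sum>j<t. f (t - 1 - j) $ i) = (\<Sum>j<t. f (t - Suc j) $ i)" by simp
    also have "\<dots> = (\<Sum>j<t. f j $ i)" by (rule sum.nat_diff_reindex)
    finally show "(\<Sum>j<t. f (t - 1 - j) $ i) = (\<Sum>j<t. f j $ i)" .
  qed
  then show ?thesis unfolding vsum_def by simp
qed

lemma ctrb_mult:
  assumes A: "A \<in> carrier_mat n n" and B: "B \<in> carrier_mat n p" and z: "z \<in> carrier_vec (n * p)"
  shows "ctrb_mat n p A B *\<^sub>v z = vsum n (\<lambda>j. (A ^\<^sub>m j * B) *\<^sub>v vblk p z j) n"
proof -
  have eq: "ctrb_mat n p A B = mat (1 * n) (n * p) (\<lambda>(a, b). (\<lambda>l j. A ^\<^sub>m j * B) (a div n) (b div p) $$ (a mod n, b mod p))"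
    unfolding ctrb_mat_def by (rule eq_matI) auto
  show ?thesis
  proof (rule eq_vecI)
    fix i assume "i < dim_vec (vsum n (\<lambda>j. (A ^\<^sub>m j * B) *\<^sub>v vblk p z j) n)"
    then have i: "i < n" by (simp add: vsum_def)
    have G: "\<And>l j. (\<lambda>l j. A ^\<^sub>m j * B) l j \<in> carrier_mat n p" using mult_carrier_mat[OF pow_carrier_mat[OF A] B] by simp
    have "(ctrb_mat n p A B *\<^sub>v z) $ (0 * n + i) = vsum n (\<lambda>j. (A ^\<^sub>m j * B) *\<^sub>v vblk p z j) n $ i"
      unfolding eq by (rule blockmat_mult[OF G z _ i]) simp
    then show "(ctrb_mat n p A B *\<^sub>v z) $ i = vsum n (\<lambda>j. (A ^\<^sub>m j * B) *\<^sub>v vblk p z j) n $ i" by simp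
  qed (simp add: ctrb_mat_def vsum_def)
qed

lemma reach_open:
  assumes A: "A \<in> carrier_mat n n" and B: "B \<in> carrier_mat n p"
    and ctrb: "controllable n p A B" and x0: "x0 \<in> carrier_vec n"
  shows "\<exists>w. (\<forall>j. w j \<in> carrier_vec p) \<and> st A B (0\<^sub>v n) w n = x0"
proof -
  have M: "ctrb_mat n p A B \<in> carrier_mat n (n * p)" unfolding ctrb_mat_def by simp
  have r: "vec_space.rank n (ctrb_mat n p A B) = n"
    using ctrb M unfolding controllable_def by simp
  obtain z where z: "z \<in> carrier_vec (n * p)" and zx: "ctrb_mat n p A B *\<^sub>v z = x0"
    using vec_space.full_row_rank_surj[OF M r x0] by blast
  define w where "w = (\<lambda>j. vblk p z (n - 1 - j))"
  have "st A B (0\<^sub>v n) w n = vsum n (\<lambda>j. (A ^\<^sub>m (n - 1 - j)) *\<^sub>v (B *\<^sub>v w j)) n"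
    by (rule st_closed[OF A B]) (simp add: w_def)
  also have "\<dots> = vsum n (\<lambda>j. (\<lambda>j. (A ^\<^sub>m j * B) *\<^sub>v vblk p z j) (n - 1 - j)) n"
  proof (rule vsum_cong)
    fix j assume "j < n"
    show "(A ^\<^sub>m (n - 1 - j)) *\<^sub>v (B *\<^sub>v w j) = (\<lambda>j. (A ^\<^sub>m j * B) *\<^sub>v vblk p z j) (n - 1 - j)"
      unfolding w_def using A B by (simp add: assoc_mult_mat_vec[of _ n n _ p])
  qed
  also have "\<dots> = vsum n (\<lambda>j. (A ^\<^sub>m j * B) *\<^sub>v vblk p z j) n" by (rule vsum_reflect)
  also have "\<dots> = x0" using ctrb_mult[OF A B z] zx by simp
  finally show ?thesis by (intro exI[of _ w]) (simp add: w_def)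
qed

lemma reach_feedback:
  assumes A: "A \<in> carrier_mat n n" and B: "B \<in> carrier_mat n p" and F: "F \<in> carrier_mat p n"
    and w: "\<And>j. w j \<in> carrier_vec p"
  shows "st (A + B * F) B (0\<^sub>v n) (\<lambda>j. w j - F *\<^sub>v st A B (0\<^sub>v n) w j) t = st A B (0\<^sub>v n) w t"
proof (induction t)
  case 0
  then show ?case by simp
next
  case (Suc t)
  have x: "st A B (0\<^sub>v n) w t \<in> carrier_vec n" by (rule st_carrier[OF A B]) (use w in auto)
  show ?case using Suc.IH fb_id2[OF A B F x w] by simp
qed

lemma reach_closed:
  assumes A: "A \<in> carrier_mat n n" and B: "B \<in> carrier_mat n p" and F: "F \<in> carrier_mat p n"
    and ctrb: "controllable n p A B" and x0: "x0 \<in> carrier_vec n"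
  shows "\<exists>w. (\<forall>j. w j \<in> carrier_vec p) \<and> st (A + B * F) B (0\<^sub>v n) w n = x0"
proof -
  obtain w where w: "\<And>j. w j \<in> carrier_vec p" and wx: "st A B (0\<^sub>v n) w n = x0"
    using reach_open[OF A B ctrb x0] by blast
  have "\<forall>j. w j - F *\<^sub>v st A B (0\<^sub>v n) w j \<in> carrier_vec p"
  proof
    fix j
    have "st A B (0\<^sub>v n) w j \<in> carrier_vec n" by (rule st_carrier[OF A B]) (use w in auto)
    then show "w j - F *\<^sub>v st A B (0\<^sub>v n) w j \<in> carrier_vec p" using w[of j] F by simp
  qed
  moreover have "st (A + B * F) B (0\<^sub>v n) (\<lambda>j. w j - F *\<^sub>v st A B (0\<^sub>v n) w j) n = x0"
    using reach_feedback[where w = w and t = n, OF A B F w] wx by simp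
  ultimately show ?thesis by (intro exI[where x = "\<lambda>j. w j - F *\<^sub>v st A B (0\<^sub>v n) w j"] conjI)
qed



lemma IG_exists:
  assumes A: "A \<in> carrier_mat n n" and B: "B \<in> carrier_mat n p" and F: "F \<in> carrier_mat p n"
    and C: "C \<in> carrier_mat m n" and D: "D \<in> carrier_mat m p"
    and ctrb: "controllable n p A B" and x0: "x0 \<in> carrier_vec n"
    and u: "\<And>l. u l \<in> carrier_vec p"
  shows "\<exists>v \<in> carrier_vec ((s + n) * p).
           IGs s n m p A B C D F *\<^sub>v v = stk s p u @\<^sub>v stk s m (\<lambda>l. C *\<^sub>v st A B x0 u l + D *\<^sub>v u l)"
proof -
  have Af: "A + B * F \<in> carrier_mat n n" using A B F by simp
  obtain w where w: "\<And>j. w j \<in> carrier_vec p" and wx: "st (A + B * F) B (0\<^sub>v n) w n = x0"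
    using reach_closed[OF A B F ctrb x0] by blast
  have stc: "\<And>l. st A B x0 u l \<in> carrier_vec n" by (rule st_carrier[OF A B x0]) (use u in auto)
  define vb where "vb = (\<lambda>j. if j < n then w j else u (j - n) - F *\<^sub>v st A B x0 u (j - n))"
  have vbc: "\<And>j. vb j \<in> carrier_vec p"
    unfolding vb_def using w u stc F by simp
  define v where "v = stk (s + n) p vb"
  have vc: "v \<in> carrier_vec ((s + n) * p)" unfolding v_def by simp
  have vbl: "\<And>j. j < s + n \<Longrightarrow> vblk p v j = vb j" unfolding v_def by (rule vblk_stk[OF _ vbc])
  define X where "X = st (A + B * F) B (0\<^sub>v n) (vblk p v)"
  have Xn: "X n = x0"
  proof -
    have "X n = st (A + B * F) B (0\<^sub>v n) w n"
      unfolding X_def by (rule st_prefix) (simp add: vbl vb_def)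
    then show ?thesis using wx by simp
  qed
  have Xl: "X (n + l) = st A B x0 u l" if "l \<le> s" for l
    using that
  proof (induction l)
    case 0
    then show ?case using Xn by simp
  next
    case (Suc l)
    then have l: "l < s" by simp
    have IH: "X (n + l) = st A B x0 u l" using Suc.IH l by simp
    have vb: "vblk p v (n + l) = u l - F *\<^sub>v st A B x0 u l"
      using vbl[of "n + l"] l by (simp add: vb_def)
    have "X (n + Suc l) = (A + B * F) *\<^sub>v X (n + l) + B *\<^sub>v vblk p v (n + l)"
      unfolding X_def by simp
    also have "\<dots> = (A + B * F) *\<^sub>v st A B x0 u l + B *\<^sub>v (u l - F *\<^sub>v st A B x0 u l)"
      using IH vb by simp
    also have "\<dots> = A *\<^sub>v st A B x0 u l + B *\<^sub>v u l"
      by (rule fb_id2[OF A B F stc u])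
    finally show ?case by simp
  qed
  define u'' where "u'' = (\<lambda>l. F *\<^sub>v X (n + l) + vblk p v (n + l))"
  have u'': "u'' l = u l" if l: "l < s" for l
  proof -
    have vb: "vblk p v (n + l) = u l - F *\<^sub>v st A B x0 u l"
      using vbl[of "n + l"] l by (simp add: vb_def)
    have "u'' l = F *\<^sub>v st A B x0 u l + (u l - F *\<^sub>v st A B x0 u l)"
      unfolding u''_def using Xl[of l] l vb by simp
    also have "\<dots> = u l"
      using F stc[of l] u[of l] by (intro eq_vecI) (auto simp: algebra_simps)
    finally show ?thesis .
  qed
  have "IGs s n m p A B C D F *\<^sub>v v = stk s p u'' @\<^sub>v stk s m (\<lambda>l. C *\<^sub>v st A B (X n) u'' l + D *\<^sub>v u'' l)"
    unfolding u''_def X_def by (rule IG_mult[OF A B F C D vc])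
  also have "stk s p u'' = stk s p u" by (rule stk_cong) (simp add: u'')
  also have "stk s m (\<lambda>l. C *\<^sub>v st A B (X n) u'' l + D *\<^sub>v u'' l) = stk s m (\<lambda>l. C *\<^sub>v st A B x0 u l + D *\<^sub>v u l)"
  proof (rule stk_cong)
    fix l assume l: "l < s"
    have "st A B (X n) u'' l = st A B x0 u l"
      unfolding Xn by (rule st_prefix) (use l u'' in simp)
    then show "C *\<^sub>v st A B (X n) u'' l + D *\<^sub>v u'' l = C *\<^sub>v st A B x0 u l + D *\<^sub>v u l"
      using u''[OF l] by simp
  qed
  finally show ?thesis using vc by blast
qed



lemma zero_append: "0\<^sub>v (a + b) = (0\<^sub>v a :: real vec) @\<^sub>v 0\<^sub>v b"
  by (rule eq_vecI) auto

lemma mult_zero_vec: "M \<in> carrier_mat nr nc \<Longrightarrow> M *\<^sub>v 0\<^sub>v nc = (0\<^sub>v nr :: real vec)"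
  by (rule eq_vecI) (auto simp: scalar_prod_def)

definition Omat :: "nat \<Rightarrow> nat \<Rightarrow> nat \<Rightarrow> real mat \<Rightarrow> real mat \<Rightarrow> real mat" where
  "Omat s n m A C = mat (s * m) n (\<lambda>(i, j). (C * (A ^\<^sub>m (i div m))) $$ (i mod m, j))"

lemma obsv_mult:
  assumes A: "A \<in> carrier_mat n n" and C: "C \<in> carrier_mat m n" and d: "d \<in> carrier_vec n"
  shows "Omat s n m A C *\<^sub>v d = stk s m (\<lambda>l. C *\<^sub>v (A ^\<^sub>m l *\<^sub>v d))"
proof (rule stk_eqI)
  show "Omat s n m A C *\<^sub>v d \<in> carrier_vec (s * m)"
    unfolding Omat_def by (rule mult_mat_vec_carrier[OF mat_carrier d])
  fix l i assume l: "l < s" and i: "i < m"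
  have lt: "l * m + i < s * m"
  proof -
    have "l * m + i < l * m + m" using i by simp
    also have "\<dots> = Suc l * m" by simp
    also have "\<dots> \<le> s * m" using l by (intro mult_right_mono) auto
    finally show ?thesis .
  qed
  have dm: "(l * m + i) div m = l" "(l * m + i) mod m = i" using i by auto
  have CA: "C * A ^\<^sub>m l \<in> carrier_mat m n" using C A by simp
  have "(Omat s n m A C *\<^sub>v d) $ (l * m + i) = (\<Sum>j<n. (C * A ^\<^sub>m l) $$ (i, j) * d $ j)"
    unfolding Omat_def using lt dm d by (simp add: scalar_prod_def lessThan_atLeast0)
  also have "\<dots> = ((C * A ^\<^sub>m l) *\<^sub>v d) $ i"
  proof -
    have dr: "dim_row (C * A ^\<^sub>m l) = m" "dim_col (C * A ^\<^sub>m l) = n" using CA by auto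
    show ?thesis using dr i d by (simp add: scalar_prod_def lessThan_atLeast0)
  qed
  also have "(C * A ^\<^sub>m l) *\<^sub>v d = C *\<^sub>v (A ^\<^sub>m l *\<^sub>v d)"
    using C A d by (simp add: assoc_mult_mat_vec[of _ m n _ n])
  finally show "(Omat s n m A C *\<^sub>v d) $ (l * m + i) = (C *\<^sub>v (A ^\<^sub>m l *\<^sub>v d)) $ i" .
qed

lemma st_lin:
  assumes A: "A \<in> carrier_mat n n" and B: "B \<in> carrier_mat n p" and d: "d \<in> carrier_vec n"
    and w: "\<And>j. w j \<in> carrier_vec p"
  shows "st A B d w l = A ^\<^sub>m l *\<^sub>v d + st A B (0\<^sub>v n) w l"
proof (induction l)
  case 0
  then show ?case using A d by simp
next
  case (Suc l)
  have s0: "st A B (0\<^sub>v n) w l \<in> carrier_vec n" by (rule st_carrier[OF A B]) (use w in auto)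
  have Ad: "A ^\<^sub>m l *\<^sub>v d \<in> carrier_vec n" using mult_mat_vec_carrier[OF pow_carrier_mat[OF A] d] .
  have "st A B d w (Suc l) = A *\<^sub>v (A ^\<^sub>m l *\<^sub>v d + st A B (0\<^sub>v n) w l) + B *\<^sub>v w l"
    using Suc.IH by simp
  also have "\<dots> = A *\<^sub>v (A ^\<^sub>m l *\<^sub>v d) + A *\<^sub>v st A B (0\<^sub>v n) w l + B *\<^sub>v w l"
    using mult_add_distrib_mat_vec[OF A Ad s0] by simp
  also have "A *\<^sub>v (A ^\<^sub>m l *\<^sub>v d) = A ^\<^sub>m Suc l *\<^sub>v d"
  proof -
    have "A *\<^sub>v (A ^\<^sub>m l *\<^sub>v d) = (A * A ^\<^sub>m l) *\<^sub>v d" using A d by (simp add: assoc_mult_mat_vec[of _ n n _ n])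
    also have "A * A ^\<^sub>m l = A ^\<^sub>m Suc l" using pow_mat_comm[OF A] by simp
    finally show ?thesis .
  qed
  also have "A ^\<^sub>m Suc l *\<^sub>v d + A *\<^sub>v st A B (0\<^sub>v n) w l + B *\<^sub>v w l
      = A ^\<^sub>m Suc l *\<^sub>v d + (A *\<^sub>v st A B (0\<^sub>v n) w l + B *\<^sub>v w l)"
    using A B s0 w[of l] d by (intro eq_vecI) (auto simp: add.assoc)
  finally show ?case by simp
qed

definition Pmat :: "nat \<Rightarrow> nat \<Rightarrow> nat \<Rightarrow> nat \<Rightarrow> real mat \<Rightarrow> real mat \<Rightarrow> real mat \<Rightarrow> real mat \<Rightarrow> real mat" where
  "Pmat s n m p A B C D = four_block_mat (1\<^sub>m (s * p)) (0\<^sub>m (s * p) n)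
       (Ns s 0 m p A B C D (0\<^sub>m p n)) (Omat s n m A C)"

lemma T_carrier: "Ns s 0 m p A B C D (0\<^sub>m p n) \<in> carrier_mat (s * m) (s * p)"
  unfolding Ns_def using mat_carrier[of "s * m" "(s + 0) * p"] by simp

lemma O_carrier: "Omat s n m A C \<in> carrier_mat (s * m) n"
  unfolding Omat_def by (rule mat_carrier)

lemma Pmat_carrier: "Pmat s n m p A B C D \<in> carrier_mat (s * p + s * m) (s * p + n)"
  unfolding Pmat_def using T_carrier O_carrier by (intro four_block_carrier_mat) auto

lemma Pmat_mult4:
  assumes a: "a \<in> carrier_vec (s * p)" and d: "d \<in> carrier_vec n"
  shows "Pmat s n m p A B C D *\<^sub>v (a @\<^sub>v d) = a @\<^sub>v (Ns s 0 m p A B C D (0\<^sub>m p n) *\<^sub>v a + Omat s n m A C *\<^sub>v d)"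
proof -
  have "Pmat s n m p A B C D *\<^sub>v (a @\<^sub>v d) = (1\<^sub>m (s * p) *\<^sub>v a + 0\<^sub>m (s * p) n *\<^sub>v d) @\<^sub>v
      (Ns s 0 m p A B C D (0\<^sub>m p n) *\<^sub>v a + Omat s n m A C *\<^sub>v d)"
    unfolding Pmat_def by (rule four_block_mat_mult_vec[OF one_carrier_mat zero_carrier_mat T_carrier O_carrier a d])
  also have "1\<^sub>m (s * p) *\<^sub>v a + 0\<^sub>m (s * p) n *\<^sub>v d = a"
    using a d zero_mat_mult_vec[OF d, of "s * p"] by simp
  finally show ?thesis .
qed

lemma Pmat_mult:
  assumes A: "A \<in> carrier_mat n n" and B: "B \<in> carrier_mat n p"
    and C: "C \<in> carrier_mat m n" and D: "D \<in> carrier_mat m p"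
    and a: "a \<in> carrier_vec (s * p)" and d: "d \<in> carrier_vec n"
  shows "Pmat s n m p A B C D *\<^sub>v (a @\<^sub>v d) = a @\<^sub>v stk s m (\<lambda>l. C *\<^sub>v st A B d (vblk p a) l + D *\<^sub>v vblk p a l)"
proof -
  have Z: "0\<^sub>m p n \<in> carrier_mat p n" by simp
  have a': "a \<in> carrier_vec ((s + 0) * p)" using a by simp
  have e1: "A + B * 0\<^sub>m p n = A" using A B by (simp add: right_mult_zero_mat[OF B])
  have e2: "C + D * 0\<^sub>m p n = C" using C D by (simp add: right_mult_zero_mat[OF D])
  have T: "Ns s 0 m p A B C D (0\<^sub>m p n) *\<^sub>v a = stk s m (\<lambda>l. C *\<^sub>v st A B (0\<^sub>v n) (vblk p a) l + D *\<^sub>v vblk p a l)"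
    using Ns_mult[OF A B Z C D a'] unfolding e1 e2 by simp
  have "Ns s 0 m p A B C D (0\<^sub>m p n) *\<^sub>v a + Omat s n m A C *\<^sub>v d
      = stk s m (\<lambda>l. C *\<^sub>v st A B d (vblk p a) l + D *\<^sub>v vblk p a l)"
  proof (rule stk_eqI)
    show "Ns s 0 m p A B C D (0\<^sub>m p n) *\<^sub>v a + Omat s n m A C *\<^sub>v d \<in> carrier_vec (s * m)"
      using T_carrier O_carrier a d by (meson add_carrier_vec mult_mat_vec_carrier)
    fix l i assume l: "l < s" and i: "i < m"
    have s0: "st A B (0\<^sub>v n) (vblk p a) l \<in> carrier_vec n" by (rule st_carrier[OF A B]) auto
    have Ad: "A ^\<^sub>m l *\<^sub>v d \<in> carrier_vec n" using mult_mat_vec_carrier[OF pow_carrier_mat[OF A] d] .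
    have lt: "l * m + i < s * m"
    proof -
      have "l * m + i < l * m + m" using i by simp
      also have "\<dots> = Suc l * m" by simp
      also have "\<dots> \<le> s * m" using l by (intro mult_right_mono) auto
      finally show ?thesis .
    qed
    have "(Ns s 0 m p A B C D (0\<^sub>m p n) *\<^sub>v a + Omat s n m A C *\<^sub>v d) $ (l * m + i)
        = (Ns s 0 m p A B C D (0\<^sub>m p n) *\<^sub>v a) $ (l * m + i) + (Omat s n m A C *\<^sub>v d) $ (l * m + i)"
      using lt T_carrier[of s m p A B C D n] O_carrier[of s n m A C] a d by simp
    also have "\<dots> = (C *\<^sub>v st A B (0\<^sub>v n) (vblk p a) l + D *\<^sub>v vblk p a l) $ i + (C *\<^sub>v (A ^\<^sub>m l *\<^sub>v d)) $ i"
      unfolding T obsv_mult[OF A C d] using stk_index[OF l i] by simp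
    also have "\<dots> = (C *\<^sub>v st A B d (vblk p a) l + D *\<^sub>v vblk p a l) $ i"
    proof -
      have "C *\<^sub>v st A B d (vblk p a) l = C *\<^sub>v (A ^\<^sub>m l *\<^sub>v d) + C *\<^sub>v st A B (0\<^sub>v n) (vblk p a) l"
        unfolding st_lin[OF A B d vblk_carrier] by (rule mult_add_distrib_mat_vec[OF C Ad s0])
      then show ?thesis using C D i s0 Ad by simp
    qed
    finally show "(Ns s 0 m p A B C D (0\<^sub>m p n) *\<^sub>v a + Omat s n m A C *\<^sub>v d) $ (l * m + i)
        = (C *\<^sub>v st A B d (vblk p a) l + D *\<^sub>v vblk p a l) $ i" .
  qed
  then show ?thesis using Pmat_mult4[OF a d] by simp
qed



lemma P_inj:
  assumes A: "A \<in> carrier_mat n n" and C: "C \<in> carrier_mat m n"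
    and obsv: "observable n m A C" and sn: "n \<le> s"
    and z: "z \<in> carrier_vec (s * p + n)" and Pz: "Pmat s n m p A B C D *\<^sub>v z = 0\<^sub>v (s * p + s * m)"
  shows "z = 0\<^sub>v (s * p + n)"
proof -
  define a where "a = vec_first z (s * p)"
  define d where "d = vec_last z n"
  have a: "a \<in> carrier_vec (s * p)" and d: "d \<in> carrier_vec n" unfolding a_def d_def by simp_all
  have zad: "z = a @\<^sub>v d" unfolding a_def d_def using z by simp
  have T: "Ns s 0 m p A B C D (0\<^sub>m p n) \<in> carrier_mat (s * m) (s * p)" by (rule T_carrier)
  have O: "Omat s n m A C \<in> carrier_mat (s * m) n" by (rule O_carrier)
  have Td: "Ns s 0 m p A B C D (0\<^sub>m p n) *\<^sub>v a + Omat s n m A C *\<^sub>v d \<in> carrier_vec (s * m)"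
    using T O a d by (meson add_carrier_vec mult_mat_vec_carrier)
  have "a @\<^sub>v (Ns s 0 m p A B C D (0\<^sub>m p n) *\<^sub>v a + Omat s n m A C *\<^sub>v d) = 0\<^sub>v (s * p) @\<^sub>v 0\<^sub>v (s * m)"
    using Pz Pmat_mult4[OF a d] zero_append[of "s * p" "s * m"] zad by simp
  then have a0: "a = 0\<^sub>v (s * p)" and r0: "Ns s 0 m p A B C D (0\<^sub>m p n) *\<^sub>v a + Omat s n m A C *\<^sub>v d = 0\<^sub>v (s * m)"
    using append_vec_eq[OF a zero_carrier_vec[of "s * p"]] by auto
  have "Ns s 0 m p A B C D (0\<^sub>m p n) *\<^sub>v a = 0\<^sub>v (s * m)" unfolding a0 by (rule mult_zero_vec[OF T])
  then have Od: "Omat s n m A C *\<^sub>v d = 0\<^sub>v (s * m)" using r0 O d by simp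
  have OM: "obsv_mat n m A C \<in> carrier_mat (n * m) n" unfolding obsv_mat_def by (rule mat_carrier)
  have "obsv_mat n m A C *\<^sub>v d = 0\<^sub>v (n * m)"
  proof (rule eq_vecI)
    fix i assume "i < dim_vec (0\<^sub>v (n * m) :: real vec)"
    then have i: "i < n * m" by simp
    have is': "i < s * m" using i sn by (meson less_le_trans mult_le_mono1)
    have "(obsv_mat n m A C *\<^sub>v d) $ i = (\<Sum>j<n. (C * (A ^\<^sub>m (i div m))) $$ (i mod m, j) * d $ j)"
      unfolding obsv_mat_def using i d by (simp add: scalar_prod_def lessThan_atLeast0)
    also have "\<dots> = (Omat s n m A C *\<^sub>v d) $ i"
      unfolding Omat_def using is' d by (simp add: scalar_prod_def lessThan_atLeast0)
    also have "\<dots> = 0" using Od is' by simp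
    finally show "(obsv_mat n m A C *\<^sub>v d) $ i = 0\<^sub>v (n * m) $ i" using i by simp
  qed (use OM d in simp)
  moreover have "vec_space.rank (n * m) (obsv_mat n m A C) = n"
    using obsv OM unfolding observable_def by simp
  ultimately have d0: "d = 0\<^sub>v n" using vec_space.full_rank_inj[OF OM _ d] by blast
  show ?thesis unfolding zad a0 d0 by (rule zero_append[symmetric])
qed

lemma IG_carrier: "IGs s n m p A B C D F \<in> carrier_mat (s * p + s * m) ((s + n) * p)"
proof -
  have "Ms s n p A B F \<in> carrier_mat (s * p) ((s + n) * p)" unfolding Ms_def by (rule mat_carrier)
  moreover have "Ns s n m p A B C D F \<in> carrier_mat (s * m) ((s + n) * p)" unfolding Ns_def by (rule mat_carrier)
  ultimately show ?thesis unfolding IGs_def by (rule carrier_append_rows)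
qed

lemma IG_colsp:
  assumes A: "A \<in> carrier_mat n n" and B: "B \<in> carrier_mat n p" and F: "F \<in> carrier_mat p n"
    and C: "C \<in> carrier_mat m n" and D: "D \<in> carrier_mat m p"
    and ctrb: "controllable n p A B"
  shows "{IGs s n m p A B C D F *\<^sub>v v | v. v \<in> carrier_vec ((s + n) * p)}
       = {Pmat s n m p A B C D *\<^sub>v z | z. z \<in> carrier_vec (s * p + n)}"
proof (intro equalityI subsetI)
  fix y assume "y \<in> {IGs s n m p A B C D F *\<^sub>v v | v. v \<in> carrier_vec ((s + n) * p)}"
  then obtain v where v: "v \<in> carrier_vec ((s + n) * p)" and y: "y = IGs s n m p A B C D F *\<^sub>v v" by blast
  have Af: "A + B * F \<in> carrier_mat n n" using A B F by simp
  define X where "X = st (A + B * F) B (0\<^sub>v n) (vblk p v)"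
  define u' where "u' = (\<lambda>l. F *\<^sub>v X (n + l) + vblk p v (n + l))"
  have Xc: "\<And>t. X t \<in> carrier_vec n" unfolding X_def by (rule st_carrier[OF Af B]) auto
  have uc: "\<And>l. u' l \<in> carrier_vec p" unfolding u'_def using Xc F by simp
  have y2: "y = stk s p u' @\<^sub>v stk s m (\<lambda>l. C *\<^sub>v st A B (X n) u' l + D *\<^sub>v u' l)"
    unfolding y X_def u'_def by (rule IG_mult[OF A B F C D v])
  have "Pmat s n m p A B C D *\<^sub>v (stk s p u' @\<^sub>v X n)
      = stk s p u' @\<^sub>v stk s m (\<lambda>l. C *\<^sub>v st A B (X n) (vblk p (stk s p u')) l + D *\<^sub>v vblk p (stk s p u') l)"
    by (rule Pmat_mult[OF A B C D stk_carrier Xc])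
  also have "stk s m (\<lambda>l. C *\<^sub>v st A B (X n) (vblk p (stk s p u')) l + D *\<^sub>v vblk p (stk s p u') l)
      = stk s m (\<lambda>l. C *\<^sub>v st A B (X n) u' l + D *\<^sub>v u' l)"
  proof (rule stk_cong)
    fix l assume l: "l < s"
    have "st A B (X n) (vblk p (stk s p u')) l = st A B (X n) u' l"
      by (rule st_prefix) (use l vblk_stk[OF _ uc] in simp)
    then show "C *\<^sub>v st A B (X n) (vblk p (stk s p u')) l + D *\<^sub>v vblk p (stk s p u') l
        = C *\<^sub>v st A B (X n) u' l + D *\<^sub>v u' l" using vblk_stk[OF l uc] by simp
  qed
  finally have "y = Pmat s n m p A B C D *\<^sub>v (stk s p u' @\<^sub>v X n)" using y2 by simp
  moreover have "stk s p u' @\<^sub>v X n \<in> carrier_vec (s * p + n)" using Xc by simp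
  ultimately show "y \<in> {Pmat s n m p A B C D *\<^sub>v z | z. z \<in> carrier_vec (s * p + n)}" by blast
next
  fix y assume "y \<in> {Pmat s n m p A B C D *\<^sub>v z | z. z \<in> carrier_vec (s * p + n)}"
  then obtain z where z: "z \<in> carrier_vec (s * p + n)" and y: "y = Pmat s n m p A B C D *\<^sub>v z" by blast
  define a where "a = vec_first z (s * p)"
  define d where "d = vec_last z n"
  have a: "a \<in> carrier_vec (s * p)" and d: "d \<in> carrier_vec n" unfolding a_def d_def by simp_all
  have zad: "z = a @\<^sub>v d" unfolding a_def d_def using z by simp
  have y2: "y = a @\<^sub>v stk s m (\<lambda>l. C *\<^sub>v st A B d (vblk p a) l + D *\<^sub>v vblk p a l)"
    unfolding y zad by (rule Pmat_mult[OF A B C D a d])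
  obtain v where v: "v \<in> carrier_vec ((s + n) * p)"
    and Iv: "IGs s n m p A B C D F *\<^sub>v v = stk s p (vblk p a) @\<^sub>v stk s m (\<lambda>l. C *\<^sub>v st A B d (vblk p a) l + D *\<^sub>v vblk p a l)"
    using IG_exists[where u = "vblk p a" and s = s, OF A B F C D ctrb d vblk_carrier] by blast
  have "y = IGs s n m p A B C D F *\<^sub>v v" unfolding y2 Iv stk_vblk[OF a] ..
  then show "y \<in> {IGs s n m p A B C D F *\<^sub>v v | v. v \<in> carrier_vec ((s + n) * p)}" using v by blast
qed

lemma IG_rank:
  assumes A: "A \<in> carrier_mat n n" and B: "B \<in> carrier_mat n p" and F: "F \<in> carrier_mat p n"
    and C: "C \<in> carrier_mat m n" and D: "D \<in> carrier_mat m p"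
    and ctrb: "controllable n p A B" and obsv: "observable n m A C" and sn: "n \<le> s"
  shows "mrank (IGs s n m p A B C D F) = s * p + n"
proof -
  have IG: "IGs s n m p A B C D F \<in> carrier_mat (s * p + s * m) ((s + n) * p)" by (rule IG_carrier)
  have P: "Pmat s n m p A B C D \<in> carrier_mat (s * p + s * m) (s * p + n)" by (rule Pmat_carrier)
  have "vec_space.rank (s * p + s * m) (IGs s n m p A B C D F) = vec_space.rank (s * p + s * m) (Pmat s n m p A B C D)"
    by (rule vec_space.rank_cong_colsp[OF IG P IG_colsp[OF A B F C D ctrb]])
  also have "\<dots> = s * p + n"
    by (rule vec_space.inj_full_rank[OF P]) (rule P_inj[OF A C obsv sn])
  finally show ?thesis using IG by simp
qed



lemma stack_stk: "stack s q \<phi> k = stk s q (\<lambda>l. \<phi> (k + 1 + int l))"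
  unfolding stack_def stk_def by simp

theorem theorem1:
  fixes n m p s :: nat and k :: int
    and A B C D F :: "real mat"
    and u x y :: "int \<Rightarrow> real vec"
  assumes n_pos: "n \<ge> 1"
    and A: "A \<in> carrier_mat n n" and B: "B \<in> carrier_mat n p"
    and C: "C \<in> carrier_mat m n" and D: "D \<in> carrier_mat m p"
    and ctrb: "controllable n p A B" and obsv: "observable n m A C"
    and F: "F \<in> carrier_mat p n"
    and s_pos: "s \<ge> 1"
    and u_dim: "\<And>j. k + 1 \<le> j \<Longrightarrow> j \<le> k + int s \<Longrightarrow> u j \<in> carrier_vec p"
    and x_dim: "\<And>j. k + 1 \<le> j \<Longrightarrow> j \<le> k + int s \<Longrightarrow> x j \<in> carrier_vec n"
    and y_dim: "\<And>j. k + 1 \<le> j \<Longrightarrow> j \<le> k + int s \<Longrightarrow> y j \<in> carrier_vec m"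
    and state_eq: "\<And>j. k + 1 \<le> j \<Longrightarrow> j < k + int s \<Longrightarrow> x (j + 1) = A *\<^sub>v x j + B *\<^sub>v u j"
    and out_eq: "\<And>j. k + 1 \<le> j \<Longrightarrow> j \<le> k + int s \<Longrightarrow> y j = C *\<^sub>v x j + D *\<^sub>v u j"
  shows "(\<exists>v \<in> carrier_vec ((s + n) * p).
            stack s p u k @\<^sub>v stack s m y k = IGs s n m p A B C D F *\<^sub>v v)
         \<and> (s \<ge> n \<longrightarrow> mrank (IGs s n m p A B C D F) = s * p + n)"
proof
  define u' where "u' = (\<lambda>l. if l < s then u (k + 1 + int l) else 0\<^sub>v p)"
  have uc: "\<And>l. u' l \<in> carrier_vec p" unfolding u'_def using u_dim by simp
  define x0 where "x0 = x (k + 1)"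
  have x0c: "x0 \<in> carrier_vec n" unfolding x0_def using x_dim s_pos by simp
  have xl: "x (k + 1 + int l) = st A B x0 u' l" if "l < s" for l
    using that
  proof (induction l)
    case 0
    then show ?case by (simp add: x0_def)
  next
    case (Suc l)
    then have l: "l < s" by simp
    have "x (k + 1 + int (Suc l)) = x ((k + 1 + int l) + 1)" by (simp add: algebra_simps)
    also have "\<dots> = A *\<^sub>v x (k + 1 + int l) + B *\<^sub>v u (k + 1 + int l)"
      by (rule state_eq) (use Suc.prems in simp_all)
    also have "\<dots> = A *\<^sub>v st A B x0 u' l + B *\<^sub>v u' l" using Suc.IH[OF l] l by (simp add: u'_def)
    finally show ?case by simp
  qed
  obtain v where v: "v \<in> carrier_vec ((s + n) * p)"
    and Iv: "IGs s n m p A B C D F *\<^sub>v v = stk s p u' @\<^sub>v stk s m (\<lambda>l. C *\<^sub>v st A B x0 u' l + D *\<^sub>v u' l)"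
    using IG_exists[where u = u' and s = s, OF A B F C D ctrb x0c uc] by blast
  have su: "stack s p u k = stk s p u'"
    unfolding stack_stk by (rule stk_cong) (simp add: u'_def)
  have sy: "stack s m y k = stk s m (\<lambda>l. C *\<^sub>v st A B x0 u' l + D *\<^sub>v u' l)"
    unfolding stack_stk
  proof (rule stk_cong)
    fix l assume l: "l < s"
    have "y (k + 1 + int l) = C *\<^sub>v x (k + 1 + int l) + D *\<^sub>v u (k + 1 + int l)"
      by (rule out_eq) (use l in simp_all)
    then show "y (k + 1 + int l) = C *\<^sub>v st A B x0 u' l + D *\<^sub>v u' l"
      using xl[OF l] l by (simp add: u'_def)
  qed
  show "\<exists>v \<in> carrier_vec ((s + n) * p). stack s p u k @\<^sub>v stack s m y k = IGs s n m p A B C D F *\<^sub>v v"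
  proof -
    have "stack s p u k @\<^sub>v stack s m y k = IGs s n m p A B C D F *\<^sub>v v"
      unfolding su sy Iv ..
    then show ?thesis using v by blast
  qed
next
  show "s \<ge> n \<longrightarrow> mrank (IGs s n m p A B C D F) = s * p + n"
    using IG_rank[OF A B F C D ctrb obsv] by blast
qed


end
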